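(* Let $Y\sim N(\theta,\sigma^2)$ with $\sigma>0$, let $\tau\ge1$, and let $\theta_0=E_0(Y^2-\sigma^2\tau)_+$, where $E_0$ denotes expectation under $\theta=0$. Then $$\big(E(Y^2-\sigma^2\tau)_+-\theta_0\big)^2\le\max\Big\{6\sigma^2\theta^2+\sigma^4\frac{4\tau^{1/2}+18}{e^{\tau/2}},\;10\theta^4\Big\}.$$
   Context: $x_+=\max\{x,0\}$. *)

theory Defs
  imports "HOL-Probability.Probability"
begin

definition pos_part :: "real \<Rightarrow> real" where
  "pos_part x = max x 0"

text \<open>E_theta (Y^2 - sigma^2 tau)_+ for Y ~ N(theta, sigma^2); normal_density mu sigma uses
  the standard deviation sigma.\<close>
definition trunc_moment :: "real \<Rightarrow> real \<Rightarrow> real \<Rightarrow> real" where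
  "trunc_moment \<theta> \<sigma> \<tau> =
     integral\<^sup>L (density lborel (normal_density \<theta> \<sigma>)) (\<lambda>y. pos_part (y\<^sup>2 - \<sigma>\<^sup>2 * \<tau>))"

end

theory Submission
  imports Defs
begin

lemma pos_part_meas[measurable]: "pos_part \<in> borel_measurable borel"
  unfolding pos_part_def by measurable

lemma shift:
  fixes \<theta> \<sigma> \<tau> :: real
  shows "trunc_moment \<theta> \<sigma> \<tau> =
    integral\<^sup>L (density lborel (normal_density 0 \<sigma>)) (\<lambda>x. pos_part ((\<theta> + x)\<^sup>2 - \<sigma>\<^sup>2 * \<tau>))"
proof -
  have "trunc_moment \<theta> \<sigma> \<tau> = (\<integral>y. normal_density \<theta> \<sigma> y * pos_part (y\<^sup>2 - \<sigma>\<^sup>2 * \<tau>) \<partial>lborel)"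
    unfolding trunc_moment_def by (subst integral_density) auto
  also have "\<dots> = (\<integral>x. normal_density \<theta> \<sigma> (\<theta> + 1 * x) * pos_part ((\<theta> + 1 * x)\<^sup>2 - \<sigma>\<^sup>2 * \<tau>) \<partial>lborel)"
    by (subst lborel_integral_real_affine[where c=1 and t=\<theta>]) auto
  also have "\<dots> = (\<integral>x. normal_density 0 \<sigma> x * pos_part ((\<theta> + x)\<^sup>2 - \<sigma>\<^sup>2 * \<tau>) \<partial>lborel)"
    by (simp add: normal_density_def)
  also have "\<dots> = integral\<^sup>L (density lborel (normal_density 0 \<sigma>)) (\<lambda>x. pos_part ((\<theta> + x)\<^sup>2 - \<sigma>\<^sup>2 * \<tau>))"
    by (subst integral_density) auto
  finally show ?thesis .
qed

lemma pos_part_lip: "\<bar>pos_part a - pos_part b\<bar> \<le> \<bar>a - b\<bar>"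
  unfolding pos_part_def by auto

theorem lemma2:
  fixes \<theta> \<sigma> \<tau> :: real
  assumes "\<sigma> > 0" and "\<tau> \<ge> 1"
  shows "(trunc_moment \<theta> \<sigma> \<tau> - trunc_moment 0 \<sigma> \<tau>)\<^sup>2
           \<le> max (6 * \<sigma>\<^sup>2 * \<theta>\<^sup>2 + \<sigma> ^ 4 * (4 * sqrt \<tau> + 18) / exp (\<tau> / 2))
                 (10 * \<theta> ^ 4)"
proof -
  define M where "M = density lborel (normal_density 0 \<sigma>)"
  interpret P: prob_space M unfolding M_def using prob_space_normal_density[OF assms(1)] .
  define h where "h y = pos_part (y\<^sup>2 - \<sigma>\<^sup>2 * \<tau>)" for y
  define D where "D x = h (\<theta> + x) - h x" for x
  define B where "B x = 2 * \<theta> * x + \<theta>\<^sup>2" for x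
  have hm[measurable]: "h \<in> borel_measurable borel" unfolding h_def by measurable
  have Dm[measurable]: "D \<in> borel_measurable M" unfolding D_def M_def by measurable
  have intM: "integrable M f \<longleftrightarrow> integrable lborel (\<lambda>x. normal_density 0 \<sigma> x * f x)"
    if [measurable]: "f \<in> borel_measurable borel" for f
    unfolding M_def by (subst integrable_density) auto
  have intgM: "integral\<^sup>L M f = integral\<^sup>L lborel (\<lambda>x. normal_density 0 \<sigma> x * f x)"
    if [measurable]: "f \<in> borel_measurable borel" for f
    unfolding M_def by (subst integral_density) auto
  have i0: "integrable M (\<lambda>x. 1::real)" by simp
  have i1: "integrable M (\<lambda>x. x::real)"
    using integrable_normal_moment[OF assms(1), of 0 1] by (subst intM) auto
  have i2: "integrable M (\<lambda>x. x\<^sup>2::real)"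
    using integrable_normal_moment[OF assms(1), of 0 2] by (subst intM) auto
  have e1: "integral\<^sup>L M (\<lambda>x. x::real) = 0"
    using integral_normal_moment_odd[OF assms(1), of 0 0] by (subst intgM) auto
  have e2: "integral\<^sup>L M (\<lambda>x. x\<^sup>2::real) = \<sigma>\<^sup>2"
    using integral_normal_moment_even[OF assms(1), of 0 1] by (subst intgM) auto
  have B2: "(B x)\<^sup>2 = 4 * \<theta>\<^sup>2 * x\<^sup>2 + 4 * \<theta>^3 * x + \<theta>^4" for x
    unfolding B_def by (simp add: power2_eq_square power3_eq_cube power4_eq_xxxx algebra_simps)
  have iB: "integrable M (\<lambda>x. B x)" unfolding B_def using i1 by auto
  have iB2: "integrable M (\<lambda>x. (B x)\<^sup>2)" unfolding B2 using i1 i2 by auto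
  have eB2: "integral\<^sup>L M (\<lambda>x. (B x)\<^sup>2) = 4 * \<theta>\<^sup>2 * \<sigma>\<^sup>2 + \<theta>^4"
    unfolding B2 using i1 i2 e1 e2 by (simp add: P.prob_space)
  have DB: "\<bar>D x\<bar> \<le> \<bar>B x\<bar>" for x
    using pos_part_lip[of "(\<theta> + x)\<^sup>2 - \<sigma>\<^sup>2 * \<tau>" "x\<^sup>2 - \<sigma>\<^sup>2 * \<tau>"]
    unfolding D_def h_def B_def by (simp add: power2_eq_square algebra_simps)
  have DB2: "(D x)\<^sup>2 \<le> (B x)\<^sup>2" for x
    using DB[of x] by (metis abs_ge_zero power2_abs power_mono)
  have iD: "integrable M D"
    by (rule Bochner_Integration.integrable_bound[OF iB]) (auto simp: DB)
  have iD2: "integrable M (\<lambda>x. (D x)\<^sup>2)"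
    by (rule Bochner_Integration.integrable_bound[OF iB2]) (auto simp: DB2)
  have ih0: "integrable M h"
  proof -
    have "\<bar>h x\<bar> \<le> x\<^sup>2" for x
      unfolding h_def pos_part_def using assms by (auto simp: max_def)
    then show ?thesis by (intro Bochner_Integration.integrable_bound[OF i2]) (auto simp: M_def)
  qed
  have ihs: "integrable M (\<lambda>x. h (\<theta> + x))"
  proof -
    have "(\<lambda>x. h (\<theta> + x)) = (\<lambda>x. D x + h x)" unfolding D_def by auto
    then show ?thesis using iD ih0 by auto
  qed
  have diff: "trunc_moment \<theta> \<sigma> \<tau> - trunc_moment 0 \<sigma> \<tau> = integral\<^sup>L M D"
    unfolding shift[of \<theta>] shift[of 0] M_def[symmetric] D_def h_def[symmetric]
    using Bochner_Integration.integral_diff[OF ihs ih0] by (simp add: h_def[abs_def])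
  have "(integral\<^sup>L M D)\<^sup>2 \<le> integral\<^sup>L M (\<lambda>x. (D x)\<^sup>2)"
    using P.variance_eq[OF iD iD2] P.variance_positive[of D] by simp
  also have "\<dots> \<le> integral\<^sup>L M (\<lambda>x. (B x)\<^sup>2)"
    by (rule integral_mono[OF iD2 iB2 DB2])
  also have "\<dots> = 4 * \<theta>\<^sup>2 * \<sigma>\<^sup>2 + \<theta>^4" by (rule eB2)
  also have "\<dots> \<le> max (6 * \<sigma>\<^sup>2 * \<theta>\<^sup>2 + \<sigma> ^ 4 * (4 * sqrt \<tau> + 18) / exp (\<tau> / 2)) (10 * \<theta> ^ 4)"
  proof -
    have nn: "0 \<le> \<sigma> ^ 4 * (4 * sqrt \<tau> + 18) / exp (\<tau> / 2)"
      using assms by (intro divide_nonneg_pos mult_nonneg_nonneg) auto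
    have "4 * \<theta>\<^sup>2 * \<sigma>\<^sup>2 + \<theta>^4 \<le> 6 * \<sigma>\<^sup>2 * \<theta>\<^sup>2 \<or> 4 * \<theta>\<^sup>2 * \<sigma>\<^sup>2 + \<theta>^4 \<le> 10 * \<theta> ^ 4"
    proof (cases "\<theta>\<^sup>2 \<le> 2 * \<sigma>\<^sup>2")
      case True
      then have "\<theta>\<^sup>2 * \<theta>\<^sup>2 \<le> \<theta>\<^sup>2 * (2 * \<sigma>\<^sup>2)" by (intro mult_left_mono) auto
      moreover have "\<theta>^4 = \<theta>\<^sup>2 * \<theta>\<^sup>2" "\<theta>\<^sup>2 * (2 * \<sigma>\<^sup>2) = 2 * (\<theta>\<^sup>2 * \<sigma>\<^sup>2)"
        "4 * \<theta>\<^sup>2 * \<sigma>\<^sup>2 = 4 * (\<theta>\<^sup>2 * \<sigma>\<^sup>2)" "6 * \<sigma>\<^sup>2 * \<theta>\<^sup>2 = 6 * (\<theta>\<^sup>2 * \<sigma>\<^sup>2)"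
        by (simp_all add: power4_eq_xxxx power2_eq_square algebra_simps)
      moreover have "0 \<le> \<theta>\<^sup>2 * \<theta>\<^sup>2" by simp
      ultimately show ?thesis by linarith
    next
      case False
      then have "\<theta>\<^sup>2 * (2 * \<sigma>\<^sup>2) \<le> \<theta>\<^sup>2 * \<theta>\<^sup>2" by (intro mult_left_mono) auto
      moreover have "\<theta>^4 = \<theta>\<^sup>2 * \<theta>\<^sup>2" "\<theta>\<^sup>2 * (2 * \<sigma>\<^sup>2) = 2 * (\<theta>\<^sup>2 * \<sigma>\<^sup>2)"
        "4 * \<theta>\<^sup>2 * \<sigma>\<^sup>2 = 4 * (\<theta>\<^sup>2 * \<sigma>\<^sup>2)" "6 * \<sigma>\<^sup>2 * \<theta>\<^sup>2 = 6 * (\<theta>\<^sup>2 * \<sigma>\<^sup>2)"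
        by (simp_all add: power4_eq_xxxx power2_eq_square algebra_simps)
      moreover have "0 \<le> \<theta>\<^sup>2 * \<theta>\<^sup>2" by simp
      ultimately show ?thesis by linarith
    qed
    then show ?thesis
    proof (elim disjE)
      assume "4 * \<theta>\<^sup>2 * \<sigma>\<^sup>2 + \<theta>^4 \<le> 6 * \<sigma>\<^sup>2 * \<theta>\<^sup>2"
      then show ?thesis using nn by (intro order_trans[OF _ max.cobounded1]) linarith
    next
      assume "4 * \<theta>\<^sup>2 * \<sigma>\<^sup>2 + \<theta>^4 \<le> 10 * \<theta> ^ 4"
      then show ?thesis by (intro order_trans[OF _ max.cobounded2])
    qed
  qed
  finally show ?thesis unfolding diff .
qed

end
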